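(* Let $\alpha,\beta,\gamma\in\mathbb{H}$ be three distinct pairwise equivalent quaternions. Then for every integer $k\ge0$, $$\gamma^k=(\gamma-\beta)(\alpha-\beta)^{-1}\alpha^k+(\alpha-\gamma)(\alpha-\beta)^{-1}\beta^k.$$
   Context: $\mathbb{H}$ denotes the real quaternions. Two quaternions $\alpha,\beta$ are equivalent if $\alpha=q^{-1}\beta q$ for some nonzero $q\in\mathbb{H}$; equivalently, $\mathrm{Re}(\alpha)=\mathrm{Re}(\beta)$ and $|\alpha|=|\beta|$. *)

theory Defs
  imports Complex_Main
begin

codatatype quat = Quat (Re: real) (Im1: real) (Im2: real) (Im3: real)

lemma quat_eqI [intro?]:
  "Re x = Re y \<Longrightarrow> Im1 x = Im1 y \<Longrightarrow> Im2 x = Im2 y \<Longrightarrow> Im3 x = Im3 y \<Longrightarrow> x = y"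
  by (cases x, cases y) simp

instantiation quat :: "{ab_group_add, one, times, inverse}"
begin

primcorec zero_quat where
  "Re 0 = 0" | "Im1 0 = 0" | "Im2 0 = 0" | "Im3 0 = 0"

primcorec one_quat where
  "Re 1 = 1" | "Im1 1 = 0" | "Im2 1 = 0" | "Im3 1 = 0"

primcorec plus_quat where
  "Re (x + y) = Re x + Re y" | "Im1 (x + y) = Im1 x + Im1 y"
| "Im2 (x + y) = Im2 x + Im2 y" | "Im3 (x + y) = Im3 x + Im3 y"

primcorec uminus_quat where
  "Re (- x) = - Re x" | "Im1 (- x) = - Im1 x" | "Im2 (- x) = - Im2 x" | "Im3 (- x) = - Im3 x"

primcorec minus_quat where
  "Re (x - y) = Re x - Re y" | "Im1 (x - y) = Im1 x - Im1 y"
| "Im2 (x - y) = Im2 x - Im2 y" | "Im3 (x - y) = Im3 x - Im3 y"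

primcorec times_quat where
  "Re (x * y) = Re x * Re y - Im1 x * Im1 y - Im2 x * Im2 y - Im3 x * Im3 y"
| "Im1 (x * y) = Re x * Im1 y + Im1 x * Re y + Im2 x * Im3 y - Im3 x * Im2 y"
| "Im2 (x * y) = Re x * Im2 y - Im1 x * Im3 y + Im2 x * Re y + Im3 x * Im1 y"
| "Im3 (x * y) = Re x * Im3 y + Im1 x * Im2 y - Im2 x * Im1 y + Im3 x * Re y"

definition qnormsq :: "quat \<Rightarrow> real" where
  "qnormsq x = (Re x)\<^sup>2 + (Im1 x)\<^sup>2 + (Im2 x)\<^sup>2 + (Im3 x)\<^sup>2"

primcorec inverse_quat where
  "Re (inverse x) = Re x / qnormsq x"
| "Im1 (inverse x) = - Im1 x / qnormsq x"
| "Im2 (inverse x) = - Im2 x / qnormsq x"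
| "Im3 (inverse x) = - Im3 x / qnormsq x"

definition divide_quat :: "quat \<Rightarrow> quat \<Rightarrow> quat" where
  "divide_quat x y = x * inverse y"

instance by standard (auto intro: quat_eqI)

end

lemma qnormsq_eq_0: "qnormsq x = 0 \<longleftrightarrow> x = 0"
proof
  assume "qnormsq x = 0"
  then have "Re x = 0 \<and> Im1 x = 0 \<and> Im2 x = 0 \<and> Im3 x = 0"
    unfolding qnormsq_def by (smt (verit) power2_less_eq_zero_iff zero_le_power2)
  then show "x = 0" by (auto intro: quat_eqI)
qed (simp add: qnormsq_def)

instance quat :: division_ring
proof
  fix a b c :: quat
  show "a * b * c = a * (b * c)" by (rule quat_eqI) (simp_all add: algebra_simps)
  show "(a + b) * c = a * c + b * c" by (rule quat_eqI) (simp_all add: algebra_simps)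
  show "a * (b + c) = a * b + a * c" by (rule quat_eqI) (simp_all add: algebra_simps)
  show "1 * a = a" by (rule quat_eqI) simp_all
  show "a * 1 = a" by (rule quat_eqI) simp_all
  show "(0::quat) \<noteq> 1" by (metis one_quat.simps(1) zero_quat.simps(1) zero_neq_one)
  show "inverse (0::quat) = 0" by (rule quat_eqI) (simp_all add: qnormsq_def)
  show "a / b = a * inverse b" by (simp add: divide_quat_def)
next
  fix a :: quat assume "a \<noteq> 0"
  then have n: "qnormsq a \<noteq> 0" by (simp add: qnormsq_eq_0)
  have e: "(Re a)\<^sup>2 + (Im1 a)\<^sup>2 + (Im2 a)\<^sup>2 + (Im3 a)\<^sup>2 = qnormsq a"
    by (simp add: qnormsq_def)
  show "inverse a * a = 1"
    by (rule quat_eqI) (use n e in \<open>simp_all add: divide_simps, algebra+\<close>)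
  show "a * inverse a = 1"
    by (rule quat_eqI) (use n e in \<open>simp_all add: divide_simps, algebra+\<close>)
qed

definition qnorm :: "quat \<Rightarrow> real" where
  "qnorm x = sqrt (qnormsq x)"

definition quat_equiv :: "quat \<Rightarrow> quat \<Rightarrow> bool" where
  "quat_equiv a b \<longleftrightarrow> (\<exists>q. q \<noteq> 0 \<and> a = inverse q * b * q)"

end

theory Submission
  imports Defs
begin

definition S :: "real \<Rightarrow> quat" where "S r = Quat r 0 0 0"

lemma S_comm: "S r * x = x * S r"
  by (rule quat_eqI) (simp_all add: S_def)

lemma S_add: "S (a + b) = S a + S b"
  by (rule quat_eqI) (simp_all add: S_def)

lemma S_mult: "S a * S b = S (a * b)"
  by (rule quat_eqI) (simp_all add: S_def)

lemma quad: "x * x = S (2 * Re x) * x - S (qnormsq x)"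
  by (rule quat_eqI) (simp_all add: S_def qnormsq_def power2_eq_square algebra_simps)

lemma Re_comm: "Re (x * y) = Re (y * x)"
  by (simp add: algebra_simps)

lemma qnormsq_mult: "qnormsq (x * y) = qnormsq x * qnormsq y"
  by (simp add: qnormsq_def power2_eq_square algebra_simps)

lemma equiv_inv:
  assumes "quat_equiv a b" shows "Re a = Re b" "qnormsq a = qnormsq b"
proof -
  obtain q where q: "q \<noteq> 0" "a = inverse q * b * q" using assms quat_equiv_def by blast
  have "Re a = Re (inverse q * (b * q))" using q by (simp add: mult.assoc)
  also have "\<dots> = Re ((b * q) * inverse q)" by (rule Re_comm)
  also have "\<dots> = Re b" using q by (simp add: mult.assoc)
  finally show "Re a = Re b" .
  have "qnormsq (inverse q) * qnormsq q = 1"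
    using q by (metis qnormsq_mult left_inverse one_quat.simps qnormsq_def
        power2_eq_square mult_1 mult_zero_left add_0_right)
  then show "qnormsq a = qnormsq b" using q by (simp add: qnormsq_mult)
qed

fun ab :: "real \<Rightarrow> real \<Rightarrow> nat \<Rightarrow> real \<times> real" where
  "ab r n 0 = (0, 1)"
| "ab r n (Suc k) = (let (a, b) = ab r n k in (2 * r * a + b, - n * a))"

lemma pow_lin:
  "x ^ k = S (fst (ab (Re x) (qnormsq x) k)) * x + S (snd (ab (Re x) (qnormsq x) k))"
proof (induction k)
  case 0
  then show ?case by (simp add: S_def) (rule quat_eqI; simp)
next
  case (Suc k)
  obtain a b where ab: "ab (Re x) (qnormsq x) k = (a, b)" by fastforce
  have "x ^ Suc k = x * (S a * x + S b)" using Suc ab by simp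
  also have "\<dots> = S a * (x * x) + S b * x"
    by (metis distrib_left mult.assoc S_comm)
  also have "\<dots> = S (2 * Re x * a + b) * x + S (- qnormsq x * a)"
  proof -
    have "S a * (x * x) = S (a * (2 * Re x)) * x - S (a * qnormsq x)"
      unfolding quad by (simp add: right_diff_distrib mult.assoc[symmetric] S_mult)
    moreover have "S (2 * Re x * a + b) = S (a * (2 * Re x)) + S b"
      by (simp add: S_add[symmetric] mult.commute)
    moreover have "S (- qnormsq x * a) = - S (a * qnormsq x)"
      by (rule quat_eqI) (simp_all add: S_def)
    ultimately show ?thesis by (simp add: distrib_right)
  qed
  finally show ?case using ab by simp
qed

theorem mainTheorem4:
  fixes \<alpha> \<beta> \<gamma> :: quat and k :: nat
  assumes "\<alpha> \<noteq> \<beta>" "\<beta> \<noteq> \<gamma>" "\<alpha> \<noteq> \<gamma>"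
    and "quat_equiv \<alpha> \<beta>" "quat_equiv \<beta> \<gamma>" "quat_equiv \<alpha> \<gamma>"
  shows "\<gamma> ^ k = (\<gamma> - \<beta>) * inverse (\<alpha> - \<beta>) * \<alpha> ^ k + (\<alpha> - \<gamma>) * inverse (\<alpha> - \<beta>) * \<beta> ^ k"
proof -
  define a where "a = fst (ab (Re \<alpha>) (qnormsq \<alpha>) k)"
  define b where "b = snd (ab (Re \<alpha>) (qnormsq \<alpha>) k)"
  have pa: "\<alpha> ^ k = S a * \<alpha> + S b" unfolding a_def b_def by (rule pow_lin)
  have pb: "\<beta> ^ k = S a * \<beta> + S b" unfolding a_def b_def
    using pow_lin[of \<beta> k] equiv_inv[OF assms(4)] by simp
  have pc: "\<gamma> ^ k = S a * \<gamma> + S b" unfolding a_def b_def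
    using pow_lin[of \<gamma> k] equiv_inv[OF assms(6)] by simp
  define d where "d = \<alpha> - \<beta>"
  define y where "y = (\<gamma> - \<beta>) * inverse d"
  have d: "d \<noteq> 0" using assms(1) d_def by simp
  have z: "(\<alpha> - \<gamma>) * inverse d = 1 - y"
  proof -
    have "\<alpha> - \<gamma> = d - (\<gamma> - \<beta>)" by (simp add: d_def)
    then have "(\<alpha> - \<gamma>) * inverse d = d * inverse d - (\<gamma> - \<beta>) * inverse d"
      by (simp only: left_diff_distrib)
    then show ?thesis using d by (simp add: y_def)
  qed
  have key: "y * \<alpha> + (1 - y) * \<beta> = \<gamma>"
  proof -
    have "y * \<alpha> + (1 - y) * \<beta> = \<beta> + y * d"
      by (simp add: d_def algebra_simps)
    also have "y * d = \<gamma> - \<beta>" using d by (simp add: y_def mult.assoc)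
    finally show ?thesis by simp
  qed
  have "(\<gamma> - \<beta>) * inverse (\<alpha> - \<beta>) * \<alpha> ^ k + (\<alpha> - \<gamma>) * inverse (\<alpha> - \<beta>) * \<beta> ^ k
      = y * (S a * \<alpha> + S b) + (1 - y) * (S a * \<beta> + S b)"
  proof -
    have e1: "(\<gamma> - \<beta>) * inverse (\<alpha> - \<beta>) = y" by (simp add: y_def d_def)
    have e2: "(\<alpha> - \<gamma>) * inverse (\<alpha> - \<beta>) = 1 - y" using z by (simp only: d_def)
    show ?thesis unfolding pa pb e1 e2 by (rule refl)
  qed
  also have "\<dots> = S a * (y * \<alpha> + (1 - y) * \<beta>) + S b"
  proof -
    have h: "u * (S a * v + S b) = S a * (u * v) + S b * u" for u v
      by (metis distrib_left mult.assoc S_comm)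
    have "S b * y + S b * (1 - y) = S b" by (simp add: right_diff_distrib)
    then show ?thesis unfolding h by (simp add: distrib_left algebra_simps)
  qed
  also have "\<dots> = \<gamma> ^ k" using key pc by simp
  finally show ?thesis by simp
qed

end
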